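(* Let $V$ be a real vector space with $m=\dim V>1$, and let $A\subset V$ be a finite set spanning $V$ with $0\notin A$ and no two elements of $A$ parallel. Let $B\subset A$ be a basis of $V$ such that the graph $G(B;A)$ is connected. Then there is a compact convex polytope $C\subset V$ with nonempty interior such that (with normals taken with respect to $[\cdot,\cdot]_B$): (i) the normal of each face of $C$ is an element of $A$; (ii) there is a vertex $v$ of $C$ lying at the intersection of exactly $m$ faces of $C$, each of which is normal to some element of $B$; (iii) $v$ is the unique vertex of $C$ with property (ii).
   Context: $[\cdot,\cdot]_B$ is the inner product on $V$ for which $B$ is orthonormal. $G(B;A)$ is the graph with vertex set $B$ and an edge between distinct $x,y\in B$ whenever there is $z\in A\setminus B$ with $[x,z]_B\ne0$ and $[y,z]_B\ne0$. Faces of $C$ are its $(m-1)$-dimensional faces. *)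

theory Defs
  imports "HOL-Analysis.Analysis"
begin

text \<open>The inner product [x,y]_B for which the basis B is orthonormal:
  sum over b in B of the products of the B-coordinates of x and y.\<close>
definition inner_B :: "'a::euclidean_space set \<Rightarrow> 'a \<Rightarrow> 'a \<Rightarrow> real" where
  "inner_B B x y = (\<Sum>b\<in>B. representation B x b * representation B y b)"

definition G_edge :: "'a::euclidean_space set \<Rightarrow> 'a set \<Rightarrow> 'a \<Rightarrow> 'a \<Rightarrow> bool" where
  "G_edge B A x y \<longleftrightarrow> x \<in> B \<and> y \<in> B \<and> x \<noteq> y \<and>
     (\<exists>z\<in>A - B. inner_B B x z \<noteq> 0 \<and> inner_B B y z \<noteq> 0)"

definition G_connected :: "'a::euclidean_space set \<Rightarrow> 'a set \<Rightarrow> bool" where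
  "G_connected B A \<longleftrightarrow> (\<forall>x\<in>B. \<forall>y\<in>B. (G_edge B A)\<^sup>*\<^sup>* x y)"

text \<open>A face (facet) F is normal to a w.r.t. [.,.]_B: F lies in a hyperplane
  {x. [a,x]_B = c} (orientation of the normal is not fixed).\<close>
definition normal_to :: "'a::euclidean_space set \<Rightarrow> 'a set \<Rightarrow> 'a \<Rightarrow> bool" where
  "normal_to B F a \<longleftrightarrow> a \<noteq> 0 \<and> (\<exists>c. F \<subseteq> {x. inner_B B a x = c})"

definition no_two_parallel :: "'a::real_vector set \<Rightarrow> bool" where
  "no_two_parallel A \<longleftrightarrow> (\<forall>x\<in>A. \<forall>y\<in>A. x \<noteq> y \<longrightarrow> \<not> (\<exists>c::real. y = c *\<^sub>R x))"

definition good_vertex :: "'a::euclidean_space set \<Rightarrow> 'a set \<Rightarrow> 'a \<Rightarrow> bool" where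
  "good_vertex B C v \<longleftrightarrow> v extreme_point_of C \<and>
     card {F. F facet_of C \<and> v \<in> F} = DIM('a) \<and>
     (\<forall>F. F facet_of C \<and> v \<in> F \<longrightarrow> (\<exists>b\<in>B. normal_to B F b))"

end

theory Submission
  imports Defs
begin

lemma generic_t:
  fixes B :: "'b set" and Z :: "('b \<Rightarrow> real) set"
  assumes "finite B" "finite Z"
  shows "\<exists>t. (\<forall>b\<in>B. t b > 0) \<and>
    (\<forall>S\<subseteq>B. S \<noteq> {} \<longrightarrow> (\<exists>b\<in>S. \<forall>z\<in>Z. z b \<noteq> 0 \<longrightarrow> 1 \<le> \<bar>\<Sum>x\<in>S. z x * t x\<bar>))"
  using assms(1)
proof (induction B rule: finite_induct)
  case empty
  then show ?case by auto
next
  case (insert b B)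
  then obtain t where tpos: "\<forall>b\<in>B. t b > 0"
    and tS: "\<forall>S\<subseteq>B. S \<noteq> {} \<longrightarrow> (\<exists>b\<in>S. \<forall>z\<in>Z. z b \<noteq> 0 \<longrightarrow> 1 \<le> \<bar>\<Sum>x\<in>S. z x * t x\<bar>)"
    by blast
  define T where "T = 1 + (\<Sum>z\<in>Z. (1 + (\<Sum>x\<in>B. \<bar>z x * t x\<bar>)) / \<bar>z b\<bar>)"
  define t' where "t' = t(b := T)"
  have Tge: "(1 + (\<Sum>x\<in>B. \<bar>z x * t x\<bar>)) / \<bar>z b\<bar> \<le> T" if "z \<in> Z" for z
  proof -
    have "(1 + (\<Sum>x\<in>B. \<bar>z x * t x\<bar>)) / \<bar>z b\<bar> \<le> (\<Sum>z\<in>Z. (1 + (\<Sum>x\<in>B. \<bar>z x * t x\<bar>)) / \<bar>z b\<bar>)"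
      by (rule member_le_sum[OF that]) (auto intro!: divide_nonneg_nonneg sum_nonneg assms(2))
    then show ?thesis unfolding T_def by linarith
  qed
  have Tpos: "T > 0"
  proof -
    have "0 \<le> (\<Sum>z\<in>Z. (1 + (\<Sum>x\<in>B. \<bar>z x * t x\<bar>)) / \<bar>z b\<bar>)"
      by (auto intro!: divide_nonneg_nonneg sum_nonneg)
    then show ?thesis unfolding T_def by linarith
  qed
  have eqB: "(\<Sum>x\<in>S. z x * t' x) = (\<Sum>x\<in>S. z x * t x)" if "S \<subseteq> B" for S z
    using that insert(2) unfolding t'_def by (intro sum.cong) auto
  show ?case
  proof (intro exI[of _ t'] conjI allI impI)
    show "\<forall>x\<in>insert b B. 0 < t' x" using tpos Tpos unfolding t'_def by auto
  next
    fix S assume S: "S \<subseteq> insert b B" "S \<noteq> {}"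
    show "\<exists>y\<in>S. \<forall>z\<in>Z. z y \<noteq> 0 \<longrightarrow> 1 \<le> \<bar>\<Sum>x\<in>S. z x * t' x\<bar>"
    proof (cases "b \<in> S")
      case False
      then have "S \<subseteq> B" using S by auto
      then show ?thesis using tS S eqB by metis
    next
      case True
      show ?thesis
      proof (intro bexI[OF _ True] ballI impI)
        fix z assume z: "z \<in> Z" "z b \<noteq> 0"
        have fin: "finite S" using S insert(1) finite_subset by blast
        have split: "(\<Sum>x\<in>S. z x * t' x) = z b * T + (\<Sum>x\<in>S - {b}. z x * t x)"
          using sum.remove[OF fin True, of "\<lambda>x. z x * t' x"] eqB[of "S - {b}" z] S
          unfolding t'_def by auto
        have "\<bar>\<Sum>x\<in>S - {b}. z x * t x\<bar> \<le> (\<Sum>x\<in>S - {b}. \<bar>z x * t x\<bar>)"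
          by (rule sum_abs)
        also have "\<dots> \<le> (\<Sum>x\<in>B. \<bar>z x * t x\<bar>)"
          using S insert(1) by (intro sum_mono2) auto
        finally have r1: "\<bar>\<Sum>x\<in>S - {b}. z x * t x\<bar> \<le> (\<Sum>x\<in>B. \<bar>z x * t x\<bar>)" .
        have "1 + (\<Sum>x\<in>B. \<bar>z x * t x\<bar>) \<le> \<bar>z b\<bar> * T"
          using Tge[OF z(1)] z(2) by (simp add: divide_le_eq mult.commute)
        also have "\<dots> = \<bar>z b * T\<bar>" using Tpos by (simp add: abs_mult)
        finally show "1 \<le> \<bar>\<Sum>x\<in>S. z x * t' x\<bar>" unfolding split using r1 by linarith
      qed
    qed
  qed
qed

context
  fixes B :: "'a::euclidean_space set"
  assumes indep: "independent B" and spanB: "span B = UNIV" and finB: "finite B"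
begin

lemma rep_lin: "linear (\<lambda>x. representation B x b)"
  by (rule linearI) (use indep spanB in \<open>auto simp: representation_add representation_scale\<close>)

lemma rep_basis: "b \<in> B \<Longrightarrow> representation B b b' = (if b' = b then 1 else 0)"
  using representation_basis[OF indep] by simp

lemma expand: "(\<Sum>b\<in>B. representation B x b *\<^sub>R b) = x"
  using sum_representation_eq[OF indep _ finB] spanB by auto

lemma rep_zero_imp: "(\<And>b. b \<in> B \<Longrightarrow> representation B x b = 0) \<Longrightarrow> x = 0"
  using expand[of x] by simp

lemma rep_pt: "b' \<in> B \<Longrightarrow> representation B (\<Sum>b\<in>B. f b *\<^sub>R b) b' = f b'"
proof -
  assume b': "b' \<in> B"
  have "representation B (\<Sum>b\<in>B. f b *\<^sub>R b) b' = (\<Sum>b\<in>B. f b * representation B b b')"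
    using linear_sum[OF rep_lin, of "\<lambda>b. f b *\<^sub>R b" B b'] linear_cmul[OF rep_lin] by simp
  also have "\<dots> = (\<Sum>b\<in>B. if b = b' then f b' else 0)"
    by (intro sum.cong) (auto simp: rep_basis)
  also have "\<dots> = f b'" using b' finB by simp
  finally show ?thesis .
qed

lemma innerB_basis: "b \<in> B \<Longrightarrow> inner_B B b x = representation B x b"
proof -
  assume b: "b \<in> B"
  have "inner_B B b x = (\<Sum>ba\<in>B. if ba = b then representation B x b else 0)"
    unfolding inner_B_def using b by (intro sum.cong) (auto simp: rep_basis)
  then show ?thesis using b finB by simp
qed

lemma innerB_basis2: "b \<in> B \<Longrightarrow> inner_B B u b = representation B u b"
proof -
  assume b: "b \<in> B"
  have "inner_B B u b = (\<Sum>ba\<in>B. if ba = b then representation B u b else 0)"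
    unfolding inner_B_def using b by (intro sum.cong) (auto simp: rep_basis)
  then show ?thesis using b finB by simp
qed

lemma innerB_lin: "linear (inner_B B u)"
  unfolding inner_B_def
  by (rule linearI) (simp_all add: linear_add[OF rep_lin] linear_cmul[OF rep_lin] sum.distrib
     algebra_simps sum_distrib_left)

definition LL :: "'a \<Rightarrow> 'a" where "LL u = adjoint (inner_B B u) (1::real)"

lemma innerB_LL: "inner_B B u x = LL u \<bullet> x"
  using adjoint_works[OF innerB_lin, where x=x and y="1::real"] unfolding LL_def by (simp add: inner_commute)

lemma LL_nz: "u \<noteq> 0 \<Longrightarrow> LL u \<noteq> 0"
proof
  assume u: "u \<noteq> 0" and L: "LL u = 0"
  have "inner_B B u u = 0" using innerB_LL[of u u] L by simp
  then have "(\<Sum>b\<in>B. (representation B u b)^2) = 0" unfolding inner_B_def by (simp add: power2_eq_square)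
  then have "\<forall>b\<in>B. (representation B u b)^2 = 0" using finB by (subst (asm) sum_nonneg_eq_0_iff) auto
  then have "u = 0" by (intro rep_zero_imp) auto
  with u show False by simp
qed

end

theorem mainTheorem11:
  fixes A B :: "'a::euclidean_space set"
  assumes "DIM('a) > 1"
    and "finite A" and "span A = UNIV" and "0 \<notin> A" and "no_two_parallel A"
    and "B \<subseteq> A" and "independent B" and "span B = UNIV"
    and "G_connected B A"
  shows "\<exists>C::'a set. polytope C \<and> compact C \<and> convex C \<and> interior C \<noteq> {} \<and>
           (\<forall>F. F facet_of C \<longrightarrow> (\<exists>a\<in>A. normal_to B F a)) \<and>
           (\<exists>v. good_vertex B C v \<and> (\<forall>w. good_vertex B C w \<longrightarrow> w = v))"
proof -
  have finB: "finite B" using assms(2,6) finite_subset by blast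
  note RL = rep_lin[OF assms(7) assms(8) finB]
  note RB = rep_basis[OF assms(7) assms(8) finB]
  note RP = rep_pt[OF assms(7) assms(8) finB]
  note EXP = expand[OF assms(7) assms(8) finB]
  note RZ = rep_zero_imp[OF assms(7) assms(8) finB]
  note IB = innerB_basis[OF assms(7) assms(8) finB]
  note IB2 = innerB_basis2[OF assms(7) assms(8) finB]
  note ILL = innerB_LL[OF assms(7) assms(8) finB]
  note LNZ = LL_nz[OF assms(7) assms(8) finB]
  have cardB: "card B = DIM('a)"
    using basis_card_eq_dim[of B UNIV] assms(7,8) by (simp add: dim_UNIV)
  have Bne: "B \<noteq> {}" using cardB assms(1) by auto
  have A0: "u \<in> A \<Longrightarrow> u \<noteq> 0" for u using assms(4) by auto
  obtain t where tpos: "\<forall>b\<in>B. t b > 0"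
    and tS: "\<forall>S\<subseteq>B. S \<noteq> {} \<longrightarrow> (\<exists>b\<in>S. \<forall>z\<in>(\<lambda>z b. representation B z b) ` (A - B).
              z b \<noteq> 0 \<longrightarrow> 1 \<le> \<bar>\<Sum>x\<in>S. z x * t x\<bar>)"
    using generic_t[OF finB, of "(\<lambda>z b. representation B z b) ` (A - B)"] assms(2) by auto
  define M where "M = 1 + (\<Sum>z\<in>A-B. \<Sum>b\<in>B. \<bar>representation B z b\<bar>)"
  have Mz: "(\<Sum>b\<in>B. \<bar>representation B z b\<bar>) \<le> M - 1" if "z \<in> A - B" for z
    unfolding M_def using that assms(2)
    by (simp, intro member_le_sum) (auto intro: sum_nonneg)
  have M1: "M \<ge> 1" unfolding M_def by (simp add: sum_nonneg)
  define \<delta> where "\<delta> = min (1/(4*M)) (Min (t ` B) / 2)"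
  have Minpos: "Min (t ` B) > 0" using tpos finB Bne by (simp add: Min_gr_iff)
  have dpos: "\<delta> > 0" unfolding \<delta>_def using M1 Minpos by simp
  have dt: "\<delta> < t b" if "b \<in> B" for b
  proof -
    have "Min (t ` B) \<le> t b" using that finB by simp
    then show ?thesis unfolding \<delta>_def using Minpos by linarith
  qed
  have dM: "\<delta> * M \<le> 1/4"
  proof -
    have "\<delta> \<le> 1/(4*M)" unfolding \<delta>_def by simp
    then have "\<delta> * M \<le> 1/(4*M) * M" using M1 by (intro mult_right_mono) auto
    also have "\<dots> = 1/4" using M1 by simp
    finally show ?thesis .
  qed
  have small: "\<bar>inner_B B z x\<bar> \<le> 1/4"
    if "z \<in> A - B" "\<And>b. b \<in> B \<Longrightarrow> \<bar>representation B x b\<bar> \<le> \<delta>" for z x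
  proof -
    have "\<bar>inner_B B z x\<bar> \<le> (\<Sum>b\<in>B. \<bar>representation B z b * representation B x b\<bar>)"
      unfolding inner_B_def by (rule sum_abs)
    also have "\<dots> \<le> (\<Sum>b\<in>B. \<bar>representation B z b\<bar> * \<delta>)"
      using that(2) by (intro sum_mono) (simp add: abs_mult mult_left_mono)
    also have "\<dots> = (\<Sum>b\<in>B. \<bar>representation B z b\<bar>) * \<delta>" by (simp add: sum_distrib_right)
    also have "\<dots> \<le> M * \<delta>" using Mz[OF that(1)] dpos by (intro mult_right_mono) auto
    finally show ?thesis using dM by (simp add: mult.commute)
  qed
  define av :: "'a \<times> bool \<Rightarrow> 'a" where "av k = (if snd k then LL B (fst k) else - LL B (fst k))" for k
  define bv :: "'a \<times> bool \<Rightarrow> real" where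
    "bv k = (if snd k then (if fst k \<in> B then t (fst k) else 1/2) else (if fst k \<in> B then 0 else 1/2))" for k
  define HS where "HS k = {x. av k \<bullet> x \<le> bv k}" for k
  define K where "K = A \<times> (UNIV :: bool set)"
  define C where "C = \<Inter> (HS ` K)"
  have finK: "finite K" unfolding K_def using assms(2) by simp
  have av_eq: "av k \<bullet> x = (if snd k then inner_B B (fst k) x else - inner_B B (fst k) x)" for k x
    unfolding av_def by (simp add: ILL)
  have av_nz: "av k \<noteq> 0" if "k \<in> K" for k
    using that LNZ A0 unfolding av_def K_def by auto
  have memC: "x \<in> C \<longleftrightarrow> (\<forall>b\<in>B. 0 \<le> representation B x b \<and> representation B x b \<le> t b) \<and>
      (\<forall>z\<in>A-B. \<bar>inner_B B z x\<bar> \<le> 1/2)" for x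
  proof -
    have "x \<in> C \<longleftrightarrow> (\<forall>u\<in>A. av (u,True) \<bullet> x \<le> bv (u,True) \<and> av (u,False) \<bullet> x \<le> bv (u,False))"
      unfolding C_def HS_def K_def by (auto simp: all_bool_eq)
    also have "\<dots> \<longleftrightarrow> (\<forall>u\<in>A. (u \<in> B \<longrightarrow> representation B x u \<le> t u \<and> 0 \<le> representation B x u) \<and>
        (u \<notin> B \<longrightarrow> \<bar>inner_B B u x\<bar> \<le> 1/2))"
      unfolding av_eq bv_def by (auto simp: IB abs_le_iff)
    also have "\<dots> \<longleftrightarrow> (\<forall>b\<in>B. 0 \<le> representation B x b \<and> representation B x b \<le> t b) \<and>
      (\<forall>z\<in>A-B. \<bar>inner_B B z x\<bar> \<le> 1/2)" using assms(6) by blast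
    finally show ?thesis .
  qed
  define pt :: "('a \<Rightarrow> real) \<Rightarrow> 'a" where "pt f = (\<Sum>b\<in>B. f b *\<^sub>R b)" for f
  have rpt: "representation B (pt f) b = f b" if "b \<in> B" for f b
    unfolding pt_def using RP[OF that] .
  have smallpt: "\<bar>inner_B B z (pt f)\<bar> \<le> 1/4" if "z \<in> A - B" "\<And>b. b \<in> B \<Longrightarrow> \<bar>f b\<bar> \<le> \<delta>" for z f
    using small[OF that(1)] that(2) rpt by simp
  define p where "p = pt (\<lambda>_. \<delta>)"
  have p_strict: "av k \<bullet> p < bv k" if kK: "k \<in> K" for k
  proof -
    obtain u s where k: "k = (u,s)" "u \<in> A" using kK unfolding K_def by auto
    show ?thesis
    proof (cases "u \<in> B")
      case True
      then show ?thesis using k dt[OF True] dpos unfolding av_eq bv_def p_def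
        by (auto simp: IB rpt)
    next
      case False
      have "\<bar>inner_B B u p\<bar> \<le> 1/4" unfolding p_def
        using k False dpos by (intro smallpt) auto
      then show ?thesis using k False unfolding av_eq bv_def by auto
    qed
  qed
  define U where "U = (\<Inter>k\<in>K. {x. av k \<bullet> x < bv k})"
  have openU: "open U" unfolding U_def using finK by (intro open_INT) (auto intro: open_halfspace_lt)
  have UC: "U \<subseteq> C" unfolding U_def C_def HS_def by (auto intro: less_imp_le)
  have pU: "p \<in> U" unfolding U_def using p_strict by auto
  have intC: "interior C \<noteq> {}" using interior_maximal[OF UC openU] pU by auto
  have AH: "affine hull C = UNIV" using affine_hull_nonempty_interior[OF intC] .
  have ADC: "aff_dim C = DIM('a)" using aff_dim_nonempty_interior[OF intC] .
  have polyh: "polyhedron C" unfolding C_def HS_def using finK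
    by (intro polyhedron_Inter) (auto intro: polyhedron_halfspace_le)
  have bdd: "bounded C"
  proof -
    have "norm x \<le> (\<Sum>b\<in>B. t b * norm b)" if "x \<in> C" for x
    proof -
      have "norm x = norm (\<Sum>b\<in>B. representation B x b *\<^sub>R b)" using EXP[of x] by simp
      also have "\<dots> \<le> (\<Sum>b\<in>B. norm (representation B x b *\<^sub>R b))" by (rule norm_sum)
      also have "\<dots> \<le> (\<Sum>b\<in>B. t b * norm b)"
        using that unfolding memC by (intro sum_mono) (auto intro: mult_right_mono)
      finally show ?thesis .
    qed
    then show ?thesis unfolding bounded_iff by blast
  qed
  have polyt: "polytope C" using polyh bdd by (simp add: polytope_eq_bounded_polyhedron)
  define P where "P G \<longleftrightarrow> G \<subseteq> HS ` K \<and> \<Inter>G = C" for G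
  have P0: "P (HS ` K)" unfolding P_def C_def by simp
  define n where "n = (LEAST n. \<exists>G. P G \<and> card G = n)"
  obtain F where PF: "P F" and cF: "card F = n"
    using LeastI_ex[of "\<lambda>n. \<exists>G. P G \<and> card G = n"] P0 unfolding n_def by blast
  have finF: "finite F" using PF finK unfolding P_def by (meson finite_imageI finite_subset)
  have FHS: "F \<subseteq> HS ` K" and FC: "\<Inter>F = C" using PF unfolding P_def by auto
  have minF: "\<Inter>G \<noteq> C" if "G \<subset> F" for G
  proof
    assume "\<Inter>G = C"
    then have "P G" using that FHS unfolding P_def by auto
    then have "n \<le> card G" unfolding n_def by (intro Least_le) blast
    moreover have "card G < card F" using that finF by (simp add: psubset_card_mono)
    ultimately show False using cF by simp
  qed
  define sel where "sel h = (SOME k. k \<in> K \<and> HS k = h)" for h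
  have sel: "sel h \<in> K \<and> HS (sel h) = h" if hF: "h \<in> F" for h
  proof -
    obtain k where "k \<in> K" "HS k = h" using FHS hF by blast
    then show ?thesis unfolding sel_def by (intro someI[of "\<lambda>k. k \<in> K \<and> HS k = h" k]) simp
  qed
  have facet_iff: "C' facet_of C \<longleftrightarrow> (\<exists>h. h \<in> F \<and> C' = C \<inter> {x. av (sel h) \<bullet> x = bv (sel h)})" for C'
  proof (rule facet_of_polyhedron_explicit[OF finF])
    show "C = affine hull C \<inter> \<Inter> F" using AH FC by simp
    show "av (sel h) \<noteq> 0 \<and> h = {x. av (sel h) \<bullet> x \<le> bv (sel h)}" if "h \<in> F" for h
      using sel[OF that] av_nz unfolding HS_def by auto
    show "C \<subset> affine hull C \<inter> \<Inter> F'" if "F' \<subset> F" for F'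
      using minF[OF that] that FC AH by auto
  qed
  have front: "frontier (HS k) = {x. av k \<bullet> x = bv k}" if "k \<in> K" for k
    unfolding HS_def using av_nz[OF that] by (intro frontier_halfspace_le) auto
  have facetD: "\<exists>k\<in>K. HS k \<in> F \<and> C' = C \<inter> {x. av k \<bullet> x = bv k}" if fC: "C' facet_of C" for C'
  proof -
    obtain h where h: "h \<in> F" "C' = C \<inter> {x. av (sel h) \<bullet> x = bv (sel h)}"
      using fC unfolding facet_iff by blast
    show ?thesis using sel[OF h(1)] h by (intro bexI[of _ "sel h"]) auto
  qed
  have facetI: "(C \<inter> {x. av k \<bullet> x = bv k}) facet_of C" if "k \<in> K" "HS k \<in> F" for k
  proof -
    have "{x. av (sel (HS k)) \<bullet> x = bv (sel (HS k))} = frontier (HS (sel (HS k)))"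
      using front[of "sel (HS k)"] sel[OF that(2)] by simp
    also have "\<dots> = {x. av k \<bullet> x = bv k}" using sel[OF that(2)] front[OF that(1)] by simp
    finally have eq: "{x. av (sel (HS k)) \<bullet> x = bv (sel (HS k))} = {x. av k \<bullet> x = bv k}" .
    show ?thesis unfolding facet_iff
      by (rule exI[of _ "HS k"]) (simp only: eq that(2) simp_thms)
  qed
  have bvB: "bv (b, s) = (if s then t b else 0)" if "b \<in> B" for b s
    unfolding bv_def using that by simp
  have avB: "av (b, s) \<bullet> x = (if s then representation B x b else - representation B x b)" if "b \<in> B" for b s x
    unfolding av_eq using that by (simp add: IB)
  have ptC: "pt f \<in> C" if "\<And>b. b \<in> B \<Longrightarrow> 0 \<le> f b \<and> f b \<le> \<delta>" for f
    unfolding memC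
  proof (intro conjI ballI)
    fix b assume b: "b \<in> B"
    show "0 \<le> representation B (pt f) b" "representation B (pt f) b \<le> t b"
      using that[OF b] dt[OF b] rpt[OF b] by auto
  next
    fix z assume z: "z \<in> A - B"
    have "\<bar>inner_B B z (pt f)\<bar> \<le> 1/4" using that by (intro smallpt[OF z]) force
    then show "\<bar>inner_B B z (pt f)\<bar> \<le> 1/2" by simp
  qed
  have lowF: "HS (b, False) \<in> F" if bB: "b \<in> B" for b
  proof (rule ccontr)
    assume nF: "HS (b, False) \<notin> F"
    define q where "q = pt (\<lambda>b'. if b' = b then - \<delta> else \<delta>)"
    have rq: "representation B q b' = (if b' = b then - \<delta> else \<delta>)" if "b' \<in> B" for b'
      unfolding q_def using rpt[OF that] by simp
    have qHS: "q \<in> HS k" if kK: "k \<in> K" and kne: "k \<noteq> (b, False)" for k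
    proof -
      obtain u s where k: "k = (u,s)" "u \<in> A" using kK unfolding K_def by auto
      show ?thesis
      proof (cases "u \<in> B")
        case True
        then show ?thesis using k kne dt[OF True] dpos rq[OF True] unfolding HS_def
          by (auto simp: avB bvB)
      next
        case False
        have "\<bar>inner_B B u q\<bar> \<le> 1/4" unfolding q_def
          using k False dpos by (intro smallpt) auto
        then show ?thesis using k False unfolding HS_def av_eq bv_def by auto
      qed
    qed
    have "q \<in> \<Inter>F"
    proof
      fix h assume hF: "h \<in> F"
      then obtain k where k: "k \<in> K" "h = HS k" using FHS by blast
      then have "k \<noteq> (b, False)" using nF hF by auto
      then show "q \<in> h" using qHS k by simp
    qed
    then have "q \<in> C" using FC by simp
    then show False using rq[OF bB] bB dpos unfolding memC by force
  qed
  have K_b: "(b, s) \<in> K" if "b \<in> B" for b s using that assms(6) unfolding K_def by auto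
  have lowfacet: "(C \<inter> {x. representation B x b = 0}) facet_of C" if bB: "b \<in> B" for b
  proof -
    have "{x. av (b, False) \<bullet> x = bv (b, False)} = {x. representation B x b = 0}"
      using bB by (auto simp: avB bvB)
    then show ?thesis using facetI[OF K_b[OF bB] lowF[OF bB]] by simp
  qed
  have keyH: "fst k = b \<and> c = (if snd k then t b else 0)"
    if F1f: "F1 facet_of C" and kK: "k \<in> K" and F1eq: "F1 = C \<inter> {x. av k \<bullet> x = bv k}"
      and bB: "b \<in> B" and F1sub: "F1 \<subseteq> {x. inner_B B b x = c}" for F1 k b c
  proof -
    obtain u s where k: "k = (u,s)" "u \<in> A" using kK unfolding K_def by auto
    have F1ne: "F1 \<noteq> {}" and adF: "aff_dim F1 = int DIM('a) - 1"
      using F1f ADC unfolding facet_of_def by auto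
    define H1 where "H1 = {x. av k \<bullet> x = bv k}"
    define H2 where "H2 = {x. LL B b \<bullet> x = c}"
    have Lb: "LL B b \<noteq> 0" using LNZ A0 bB assms(6) by auto
    have eqH: "affine hull F1 = H" if "F1 \<subseteq> H" "H = {x. a \<bullet> x = d}" "a \<noteq> 0" for H a d
    proof (rule affine_dim_equal)
      show "affine (affine hull F1)" by simp
      show "affine H" using that(2) by (simp add: affine_hyperplane)
      show "affine hull F1 \<noteq> {}" using F1ne by simp
      show "affine hull F1 \<subseteq> H" using that(1,2) by (intro hull_minimal) (auto simp: affine_hyperplane)
      show "aff_dim (affine hull F1) = aff_dim H" using that(2,3) adF DIM_positive
        by (simp add: aff_dim_affine_hull)
    qed
    have "affine hull F1 = H1" using eqH[of H1 "av k" "bv k"] F1eq av_nz[OF kK] unfolding H1_def by auto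
    moreover have "affine hull F1 = H2" using eqH[of H2 "LL B b" c] F1sub Lb unfolding H2_def
      by (auto simp: ILL)
    ultimately have H12: "H1 = H2" by simp
    define x0 where "x0 = c *\<^sub>R b"
    have rx0: "representation B x0 b' = (if b' = b then c else 0)" if "b' \<in> B" for b'
      unfolding x0_def using linear_cmul[OF RL, of c b] RB[OF bB] by simp
    have x0H2: "x0 \<in> H2" unfolding H2_def using rx0[OF bB] by (simp add: ILL[symmetric] IB[OF bB])
    have x0H1: "av k \<bullet> x0 = bv k" using x0H2 H12 unfolding H1_def by auto
    have ru0: "representation B u b' = 0" if b'B: "b' \<in> B" and b'ne: "b' \<noteq> b" for b'
    proof -
      have "representation B (x0 + b') b = c" using linear_add[OF RL, of x0 b'] rx0[OF bB] RB[OF b'B] b'ne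
        by simp
      then have "x0 + b' \<in> H2" unfolding H2_def by (simp add: ILL[symmetric] IB[OF bB])
      then have "av k \<bullet> (x0 + b') = bv k" using H12 unfolding H1_def by auto
      then have "av k \<bullet> b' = 0" using x0H1 by (simp add: inner_add_right)
      then have "inner_B B u b' = 0" unfolding av_eq k by (auto split: if_splits)
      then show ?thesis using IB2[OF b'B] by simp
    qed
    have "u = (\<Sum>b'\<in>B. representation B u b' *\<^sub>R b')" using EXP[of u] by simp
    also have "\<dots> = representation B u b *\<^sub>R b"
      using finB bB ru0 by (subst sum.remove[OF finB bB]) (auto intro!: sum.neutral)
    finally have ub: "u = representation B u b *\<^sub>R b" .
    have "u = b"
    proof (rule ccontr)
      assume ne: "u \<noteq> b"
      have bA: "b \<in> A" using bB assms(6) by auto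
      have "\<not> (\<exists>c. u = c *\<^sub>R b)" using assms(5) bA k(2) ne[symmetric] unfolding no_two_parallel_def by metis
      then show False using ub by blast
    qed
    moreover have "c = (if s then t b else 0)"
      using x0H1 rx0[OF bB] unfolding k \<open>u = b\<close> avB[OF bB] bvB[OF bB]
      by (auto split: if_splits)
    ultimately show ?thesis using k by simp
  qed
  have r0: "representation B 0 b = 0" for b using linear_0[OF RL] by simp
  have zeroC: "0 \<in> C" unfolding memC using tpos by (auto simp: r0 inner_B_def)
  have ext0: "0 extreme_point_of C" unfolding extreme_point_of_def
  proof (intro conjI ballI zeroC notI)
    fix a b' assume aC: "a \<in> C" and bC: "b' \<in> C" and seg: "0 \<in> open_segment a b'"
    then obtain u where ne: "a \<noteq> b'" and u: "0 < u" "u < 1" and eq0: "0 = (1 - u) *\<^sub>R a + u *\<^sub>R b'"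
      unfolding in_segment by blast
    have "representation B a c = 0 \<and> representation B b' c = 0" if cB: "c \<in> B" for c
    proof -
      have "0 = representation B ((1 - u) *\<^sub>R a + u *\<^sub>R b') c" using eq0 r0 by metis
      also have "\<dots> = (1 - u) * representation B a c + u * representation B b' c"
        using linear_add[OF RL] linear_cmul[OF RL] by simp
      finally have e: "(1 - u) * representation B a c + u * representation B b' c = 0" by simp
      have "0 \<le> representation B a c" "0 \<le> representation B b' c" using aC bC cB unfolding memC by auto
      then show ?thesis using e u
        by (smt (verit) mult_pos_pos mult_nonneg_nonneg mult_eq_0_iff)
    qed
    then have "a = 0" "b' = 0" using RZ by auto
    then show False using ne by simp
  qed
  have Z0: "{F'. F' facet_of C \<and> 0 \<in> F'} = (\<lambda>b. C \<inter> {x. representation B x b = 0}) ` B"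
  proof (intro equalityI subsetI)
    fix F' assume "F' \<in> {F'. F' facet_of C \<and> 0 \<in> F'}"
    then have fF: "F' facet_of C" and zF: "0 \<in> F'" by auto
    obtain k where kK: "k \<in> K" and Fk: "F' = C \<inter> {x. av k \<bullet> x = bv k}" using facetD[OF fF] by blast
    obtain u s where k: "k = (u,s)" "u \<in> A" using kK unfolding K_def by auto
    have bv0: "bv k = 0" using zF Fk by simp
    have uB: "u \<in> B" using bv0 k unfolding bv_def by (auto split: if_splits)
    have ns: "\<not> s" using bv0 k tpos uB unfolding bv_def by (auto split: if_splits)
    have "F' = C \<inter> {x. representation B x u = 0}" using Fk k ns uB by (auto simp: avB bvB)
    then show "F' \<in> (\<lambda>b. C \<inter> {x. representation B x b = 0}) ` B" using uB by blast
  next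
    fix F' assume "F' \<in> (\<lambda>b. C \<inter> {x. representation B x b = 0}) ` B"
    then obtain b where bB: "b \<in> B" and Fb: "F' = C \<inter> {x. representation B x b = 0}" by blast
    show "F' \<in> {F'. F' facet_of C \<and> 0 \<in> F'}" using lowfacet[OF bB] Fb zeroC r0 by auto
  qed
  have injZ: "inj_on (\<lambda>b. C \<inter> {x. representation B x b = 0}) B"
  proof (rule inj_onI)
    fix b1 b2 assume b1: "b1 \<in> B" and b2: "b2 \<in> B"
      and eq: "C \<inter> {x. representation B x b1 = 0} = C \<inter> {x. representation B x b2 = 0}"
    show "b1 = b2"
    proof (rule ccontr)
      assume ne: "b1 \<noteq> b2"
      define q where "q = pt (\<lambda>b'. if b' = b1 then 0 else \<delta>)"
      have qC: "q \<in> C" unfolding q_def using dpos by (intro ptC) auto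
      have q1: "representation B q b1 = 0" and q2: "representation B q b2 = \<delta>"
        unfolding q_def using rpt b1 b2 ne by auto
      have "q \<in> C \<inter> {x. representation B x b1 = 0}" using qC q1 by simp
      then have "q \<in> C \<inter> {x. representation B x b2 = 0}" using eq by simp
      then show False using q2 dpos by simp
    qed
  qed
  have card0: "card {F'. F' facet_of C \<and> 0 \<in> F'} = DIM('a)"
    unfolding Z0 using card_image[OF injZ] cardB by simp
  have good0: "good_vertex B C 0"
    unfolding good_vertex_def
  proof (intro conjI ext0 card0 allI impI)
    fix F' assume "F' facet_of C \<and> 0 \<in> F'"
    then obtain b where bB: "b \<in> B" and Fb: "F' = C \<inter> {x. representation B x b = 0}" using Z0 by blast
    have "normal_to B F' b" unfolding normal_to_def using A0 bB assms(6) Fb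
      by (auto simp: IB intro!: exI[of _ 0])
    then show "\<exists>b\<in>B. normal_to B F' b" using bB by blast
  qed
  have facets_i: "\<forall>F'. F' facet_of C \<longrightarrow> (\<exists>a\<in>A. normal_to B F' a)"
  proof (intro allI impI)
    fix F' assume fF: "F' facet_of C"
    obtain k where kK: "k \<in> K" and Fk: "F' = C \<inter> {x. av k \<bullet> x = bv k}" using facetD[OF fF] by blast
    obtain u s where k: "k = (u,s)" "u \<in> A" using kK unfolding K_def by auto
    have "F' \<subseteq> {x. inner_B B u x = (if s then bv k else - bv k)}"
      using Fk k by (auto simp: av_eq)
    then have "normal_to B F' u" unfolding normal_to_def using A0[OF k(2)] by blast
    then show "\<exists>a\<in>A. normal_to B F' a" using k by blast
  qed
  have uniq: "w = 0" if gw: "good_vertex B C w" for w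
  proof -
    define W where "W = {F'. F' facet_of C \<and> w \<in> F'}"
    have cW: "card W = DIM('a)" and nW: "\<And>F'. F' \<in> W \<Longrightarrow> \<exists>b\<in>B. normal_to B F' b"
      using gw unfolding good_vertex_def W_def by auto
    have finW: "finite W" using cW DIM_positive card_ge_0_finite by (metis)
    define g where "g F' = (SOME b. b \<in> B \<and> normal_to B F' b)" for F'
    have gp: "g F' \<in> B \<and> normal_to B F' (g F')" if "F' \<in> W" for F'
      unfolding g_def using nW[OF that] by (metis (mono_tags, lifting) someI_ex)
    have CW: "F' = C \<inter> {x. representation B x (g F') = representation B w (g F')} \<and>
       (representation B w (g F') = 0 \<or> representation B w (g F') = t (g F'))" if FW: "F' \<in> W" for F'
    proof -
      have fF: "F' facet_of C" and wF: "w \<in> F'" using FW unfolding W_def by auto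
      define b where "b = g F'"
      have bB: "b \<in> B" and nb: "normal_to B F' b" using gp[OF FW] unfolding b_def by auto
      obtain c where Fc: "F' \<subseteq> {x. inner_B B b x = c}" using nb unfolding normal_to_def by blast
      obtain k where kK: "k \<in> K" and Fk: "F' = C \<inter> {x. av k \<bullet> x = bv k}" using facetD[OF fF] by blast
      have kb: "fst k = b" and ck: "c = (if snd k then t b else 0)"
        using keyH[OF fF kK Fk bB Fc] by auto
      have wc: "representation B w b = c" using wF Fc IB[OF bB] by auto
      obtain s where ks: "k = (b, s)" using kb by (cases k) auto
      have "{x. av k \<bullet> x = bv k} = {x. representation B x b = c}"
        using ck unfolding ks by (auto simp: avB[OF bB] bvB[OF bB])
      then show ?thesis using Fk wc ck unfolding b_def by (auto split: if_splits)
    qed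
    have injg: "inj_on g W"
    proof (rule inj_onI)
      fix F1 F2 assume "F1 \<in> W" "F2 \<in> W" "g F1 = g F2"
      then show "F1 = F2" using CW[of F1] CW[of F2] by metis
    qed
    have gW: "g ` W = B"
    proof (rule card_subset_eq[OF finB])
      show "g ` W \<subseteq> B" using gp by auto
      show "card (g ` W) = card B" using card_image[OF injg] cW cardB by simp
    qed
    have coord: "representation B w b = 0 \<or> representation B w b = t b" if bB: "b \<in> B" for b
    proof -
      obtain F' where "F' \<in> W" "b = g F'" using gW bB by blast
      then show ?thesis using CW by blast
    qed
    have "W \<noteq> {}" using cW DIM_positive by (metis card.empty less_irrefl)
    then obtain F' where "F' \<in> W" by blast
    then have wC: "w \<in> C" unfolding W_def using facet_of_imp_subset by blast
    show "w = 0"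
    proof (rule ccontr)
      assume wne: "w \<noteq> 0"
      define S where "S = {b \<in> B. representation B w b \<noteq> 0}"
      have SB: "S \<subseteq> B" unfolding S_def by auto
      have Sne: "S \<noteq> {}" using wne RZ unfolding S_def by blast
      obtain b where bS: "b \<in> S" and bprop: "\<forall>z\<in>(\<lambda>z b. representation B z b) ` (A - B).
              z b \<noteq> 0 \<longrightarrow> 1 \<le> \<bar>\<Sum>x\<in>S. z x * t x\<bar>"
        using tS SB Sne by blast
      have bB: "b \<in> B" using bS SB by auto
      obtain b' where b'B: "b' \<in> B" and b'ne: "b' \<noteq> b"
      proof -
        have "\<not> B \<subseteq> {b}"
        proof
          assume "B \<subseteq> {b}"
          then have "card B \<le> 1" using card_mono[of "{b}" B] by simp
          then show False using cardB assms(1) by simp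
        qed
        then show ?thesis using that by blast
      qed
      have "(G_edge B A)\<^sup>*\<^sup>* b b'" using assms(9) bB b'B unfolding G_connected_def by blast
      then obtain y where "G_edge B A b y"
        using b'ne by (cases rule: converse_rtranclpE) auto
      then obtain z where zAB: "z \<in> A - B" and zb: "inner_B B b z \<noteq> 0"
        unfolding G_edge_def by blast
      have rz: "representation B z b \<noteq> 0" using zb IB[OF bB] by simp
      have big: "1 \<le> \<bar>\<Sum>x\<in>S. representation B z x * t x\<bar>"
        using bprop zAB rz by auto
      have "inner_B B z w = (\<Sum>x\<in>B. representation B z x * representation B w x)"
        unfolding inner_B_def ..
      also have "\<dots> = (\<Sum>x\<in>S. representation B z x * representation B w x)"
        using finB SB by (intro sum.mono_neutral_right) (auto simp: S_def)
      also have "\<dots> = (\<Sum>x\<in>S. representation B z x * t x)"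
        using coord unfolding S_def by (intro sum.cong) auto
      finally have "1 \<le> \<bar>inner_B B z w\<bar>" using big by simp
      moreover have "\<bar>inner_B B z w\<bar> \<le> 1/2" using wC zAB unfolding memC by blast
      ultimately show False by simp
    qed
  qed
  show ?thesis
    using polyt polytope_imp_compact polytope_imp_convex intC facets_i good0 uniq by blast
qed

end
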